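(* Assume (C), $c>a$ and $d<b$. (a) If $c+d\ge 0$, then the set $\mathcal E=\{(x,y,z)\in S^2:\ z\ge \frac{a+dx}{c}\}$ is invariant under $V$, i.e. $V(\mathcal E)\subseteq \mathcal E$. (b) If $c+d<0$, then the set $F=\{(x,y,z)\in S^2:\ z< \frac{a+dx}{c}\}$ is invariant under $V$, i.e. $V(F)\subseteq F$.
   Context: Let $S^2=\{(x,y,z)\in\mathbb{R}^3:\ x,y,z\ge 0,\ x+y+z=1\}$. Fix real parameters $a,b,c,d$ satisfying condition (C): $0\le a\le 1$, $0\le b\le 1$, $-(1-a)\le c\le 1+a$, $-(1-b)\le d\le 1-a$. Let $V(x,y,z)=\big(x(1-b+dy),\ y(1-a-dx+cz),\ z(1-cy)+ay+bx\big)$; under (C) it maps $S^2$ into itself. *)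

theory Defs
  imports Complex_Main
begin

definition simplex2 :: "(real \<times> real \<times> real) set" where
  "simplex2 = {(x,y,z). x \<ge> 0 \<and> y \<ge> 0 \<and> z \<ge> 0 \<and> x + y + z = 1}"

definition condC :: "real \<Rightarrow> real \<Rightarrow> real \<Rightarrow> real \<Rightarrow> bool" where
  "condC a b c d \<longleftrightarrow> 0 \<le> a \<and> a \<le> 1 \<and> 0 \<le> b \<and> b \<le> 1 \<and>
     -(1 - a) \<le> c \<and> c \<le> 1 + a \<and> -(1 - b) \<le> d \<and> d \<le> 1 - a"

definition Vop :: "real \<Rightarrow> real \<Rightarrow> real \<Rightarrow> real \<Rightarrow> real \<times> real \<times> real \<Rightarrow> real \<times> real \<times> real" where
  "Vop a b c d p = (case p of (x,y,z) \<Rightarrow>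
     (x * (1 - b + d * y), y * (1 - a - d * x + c * z), z * (1 - c * y) + a * y + b * x))"

definition setE :: "real \<Rightarrow> real \<Rightarrow> real \<Rightarrow> real \<Rightarrow> (real \<times> real \<times> real) set" where
  "setE a b c d = {(x,y,z) \<in> simplex2. z \<ge> (a + d * x) / c}"

definition setF :: "real \<Rightarrow> real \<Rightarrow> real \<Rightarrow> real \<Rightarrow> (real \<times> real \<times> real) set" where
  "setF a b c d = {(x,y,z) \<in> simplex2. z < (a + d * x) / c}"

end

theory Submission
  imports Defs
begin

lemma simp_inv:
  fixes a b c d x y z :: real
  assumes C: "condC a b c d" and s: "x \<ge> 0" "y \<ge> 0" "z \<ge> 0" "x + y + z = 1"
  shows "x * (1 - b + d * y) \<ge> 0 \<and> y * (1 - a - d * x + c * z) \<ge> 0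
       \<and> z * (1 - c * y) + a * y + b * x \<ge> 0
       \<and> x * (1 - b + d * y) + y * (1 - a - d * x + c * z) + (z * (1 - c * y) + a * y + b * x) = 1"
proof -
  from C have h: "0 \<le> a" "a \<le> 1" "0 \<le> b" "b \<le> 1" "-(1 - a) \<le> c" "c \<le> 1 + a"
     "-(1 - b) \<le> d" "d \<le> 1 - a" by (auto simp: condC_def)
  have y1: "y \<le> 1" using s by linarith
  have "d * y \<ge> -(1-b)"
  proof (cases "d \<ge> 0")
    case True then show ?thesis using s h by (smt (verit) mult_nonneg_nonneg)
  next
    case False then have "d * y \<ge> d * 1" using y1 by (intro mult_left_mono_neg) auto
    then show ?thesis using h by simp
  qed
  hence 1: "x * (1 - b + d * y) \<ge> 0" using s by simp
  have "d * x \<le> (1-a) * x" using h s by (simp add: mult_right_mono)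
  hence f1: "d * x \<le> x - a * x" by (simp add: algebra_simps)
  have "c * z \<ge> -(1-a) * z" using h s by (simp add: mult_right_mono)
  hence f2: "c * z \<ge> a * z - z" by (simp add: algebra_simps)
  have "a*(x+y+z) = a" using s by simp
  hence e0: "a*x+a*y+a*z = a" by (simp add: algebra_simps)
  have e2: "y - a*y = 1 - a - x + a*x - z + a*z" using e0 s(4) by linarith
  have "1 - a - d * x + c * z \<ge> y - a*y" using f1 f2 e2 by linarith
  hence "1 - a - d * x + c * z \<ge> (1-a) * y" by (simp add: algebra_simps)
  moreover have "(1-a)*y \<ge> 0" using h s by simp
  ultimately have 2: "y * (1 - a - d * x + c * z) \<ge> 0" using s by simp
  have "c * y \<le> (1+a) * y" using h s by (simp add: mult_right_mono)
  hence "z * (c*y) \<le> z * ((1+a)*y)" using s by (simp add: mult_left_mono)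
  hence "z * (1 - c * y) + a * y \<ge> z * (1-y) + a*y*(1-z)" by (simp add: algebra_simps)
  moreover have "z * (1-y) \<ge> 0" "a*y*(1-z) \<ge> 0" using s h by auto
  moreover have "b * x \<ge> 0" using s h by simp
  ultimately have 3: "z * (1 - c * y) + a * y + b * x \<ge> 0" by linarith
  show ?thesis using 1 2 3 s by (simp add: algebra_simps)
qed

lemma keyid:
  fixes a b c d x y z :: real
  assumes "x + y + z = 1"
  shows "c * (z * (1 - c * y) + a * y + b * x) - a - d * (x * (1 - b + d * y))
       = (c*z - a - d*x) * (1 - c*y) + x*(c+d)*(b - d*y)"
proof -
  have "z = 1 - x - y" using assms by simp
  then show ?thesis by (simp add: algebra_simps)
qed

theorem lemma4p2:
  fixes a b c d :: real
  assumes "condC a b c d" and "c > a" and "d < b"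
  shows "(c + d \<ge> 0 \<longrightarrow> Vop a b c d ` setE a b c d \<subseteq> setE a b c d)
       \<and> (c + d < 0 \<longrightarrow> Vop a b c d ` setF a b c d \<subseteq> setF a b c d)"
proof -
  from assms(1) have h: "0 \<le> a" "a \<le> 1" "0 \<le> b" "b \<le> 1" "-(1 - a) \<le> c" "c \<le> 1 + a"
     "-(1 - b) \<le> d" "d \<le> 1 - a" by (auto simp: condC_def)
  have cp: "c > 0" using h assms by linarith
  have bdy: "b - d*y \<ge> 0" if "0 \<le> y" "y \<le> 1" for y :: real
  proof (cases "d \<ge> 0")
    case True then have "d*y \<le> d * 1" using that by (intro mult_left_mono) auto
    then show ?thesis using assms by simp
  next
    case False then have "d*y \<le> 0" using that by (simp add: mult_nonpos_nonneg)
    then show ?thesis using h by simp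
  qed
  have A: "Vop a b c d p \<in> setE a b c d" if "c + d \<ge> 0" "p \<in> setE a b c d" for p
  proof -
    obtain x y z where p: "p = (x,y,z)" by (cases p)
    with that have s: "x \<ge> 0" "y \<ge> 0" "z \<ge> 0" "x + y + z = 1" and g: "z \<ge> (a + d*x)/c"
      by (auto simp: setE_def simplex2_def)
    have "a + d*x \<le> z*c" using g cp by (simp only: pos_divide_le_eq)
    hence G: "c*z - a - d*x \<ge> 0" by (simp add: mult.commute)
    have "x*(c+d) \<ge> 0" using s that by simp
    moreover have "c*(x+y+z) = c" using s by simp
    hence "c*x+c*y+c*z = c" by (simp add: algebra_simps)
    moreover have "x*(c+d) = c*x + d*x" by (simp add: algebra_simps)
    ultimately have "c*y \<le> c - a" using G by linarith
    hence cy: "1 - c*y \<ge> 0" using h by linarith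
    have "(c*z - a - d*x) * (1 - c*y) \<ge> 0" using G cy by simp
    moreover have "x*(c+d)*(b - d*y) \<ge> 0" using s that bdy[of y] by simp
    ultimately have "c * (z * (1 - c * y) + a * y + b * x) - a - d * (x * (1 - b + d * y)) \<ge> 0"
      using keyid[OF s(4), of c a b d] by linarith
    hence "z * (1 - c * y) + a * y + b * x \<ge> (a + d * (x * (1 - b + d * y))) / c"
      using cp by (simp only: pos_divide_le_eq mult.commute[of _ c])
    then show ?thesis using simp_inv[OF assms(1) s] p
      by (simp add: Vop_def setE_def simplex2_def)
  qed
  have B: "Vop a b c d p \<in> setF a b c d" if "c + d < 0" "p \<in> setF a b c d" for p
  proof -
    obtain x y z where p: "p = (x,y,z)" by (cases p)
    with that have s: "x \<ge> 0" "y \<ge> 0" "z \<ge> 0" "x + y + z = 1" and g: "z < (a + d*x)/c"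
      by (auto simp: setF_def simplex2_def)
    have "z*c < a + d*x" using g cp by (simp only: pos_less_divide_eq)
    hence G: "c*z - a - d*x < 0" by (simp add: mult.commute)
    have c1: "c < 1" using that h by linarith
    have "c*y \<le> c * 1" using s cp by (intro mult_left_mono) auto
    hence cy: "1 - c*y > 0" using c1 by linarith
    have "(c*z - a - d*x) * (1 - c*y) < 0" using G cy by (simp add: mult_neg_pos)
    moreover have "x*(c+d)*(b - d*y) \<le> 0"
    proof -
      have "x*(c+d) \<le> 0" using s that by (simp add: mult_nonneg_nonpos)
      thus ?thesis using bdy[of y] s by (simp add: mult_nonpos_nonneg)
    qed
    ultimately have "c * (z * (1 - c * y) + a * y + b * x) - a - d * (x * (1 - b + d * y)) < 0"
      using keyid[OF s(4), of c a b d] by linarith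
    hence "z * (1 - c * y) + a * y + b * x < (a + d * (x * (1 - b + d * y))) / c"
      using cp by (simp only: pos_less_divide_eq mult.commute[of _ c])
    then show ?thesis using simp_inv[OF assms(1) s] p
      by (simp add: Vop_def setF_def simplex2_def)
  qed
  show ?thesis using A B by blast
qed

end
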